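(* A profile $(D_n,G_n,\mathbf q_n)_{n\in\mathcal N}$ is a Variational Equilibrium of the peer-to-peer game if and only if it is an optimal solution of the centralized problem (P). That is, the set of Variational Equilibria coincides with the set of social welfare maximizers.
   Context: Model. $\mathcal N$ is a finite set of nodes (agents) containing a root node $0$. Each node $n$ has a neighborhood $\Omega_n\subseteq\mathcal N$ with $n\in\Omega_n$; the neighbor relation is symmetric ($m\in\Omega_n\iff n\in\Omega_m$) and every node is a neighbor of the root. Decision variables: demand $D_n$, flexibility activation $G_n$, and for each $m\in\Omega_n\setminus\{n\}$ a trade $q_{mn}\in\mathbb R$ (quantity sent from $m$ to $n$; $q_{mn}>0$ means $n$ buys from $m$). The net import of $n$ is $Q_n=\sum_{m\in\Omega_n\setminus\{n\}}q_{mn}$. Parameters: $0\le\underline D_n\le\overline D_n$, $0\le\underline G_n\le\overline G_n$, capacities $\kappa_{nm}=\kappa_{mn}\in[0,\infty)$, exogenous renewable generation $\Delta G_n$, constants $a_n,b_n,d_n>0$, $\tilde a_n,\tilde b_n>0$, target demand $D_n^\star$, preference prices $c_{nm}>0$. Costs/utilities: $C_n(G)=\tfrac12 a_nG^2+b_nG+d_n$, $U_n(D)=-\tilde a_n(D-D_n^\star)^2+\tilde b_n$, $\tilde C_n(\mathbf q_n)=\sum_{m\in\Omega_n\setminus\{n\}}c_{nm}q_{mn}$, $\Pi_n=U_n(D_n)-C_n(G_n)-\tilde C_n(\mathbf q_n)$, $SW=\sum_{n\in\mathcal N}\Pi_n$. Centralized problem (P): maximize $SW$ over $(\mathbf D,\mathbf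 G,\mathbf q)$ subject to (1) $\underline D_n\le D_n\le\overline D_n$; (2) $\underline G_n\le G_n\le\overline G_n$; (3) $q_{mn}\le\kappa_{mn}$ for all $n$ and $m\in\Omega_n\setminus\{n\}$; (4) $q_{mn}+q_{nm}\le0$ for each pair of distinct neighbors; (5) $D_n=G_n+\Delta G_n+Q_n$ for all $n$. Peer-to-peer game: agent $n$ controls $(D_n,G_n,\mathbf q_n)$ with $\mathbf q_n=(q_{mn})_{m\in\Omega_n\setminus\{n\}}$ and, taking the other agents' variables as given, maximizes $\Pi_n$ subject to $\underline D_n\le D_n\le\overline D_n$ (multipliers $\underline\mu_n,\overline\mu_n$), $\underline G_n\le G_n\le\overline G_n$ ($\underline\nu_n,\overline\nu_n$), $q_{mn}\le\kappa_{mn}$ for $m\in\Omega_n\setminus\{n\}$ ($\xi_{nm}$), the coupling constraints $q_{mn}\le-q_{nm}$ for $m\in\Omega_n\setminus\{n\}$ ($\zeta_{nm}$), and $D_n=G_n+\Delta G_n+Q_n$ ($\lambda_n$). The system $KKT_n$ consists of $2\tilde a_n(D_n-D_n^\star)-\underline\mu_n+\overline\mu_n+\lambda_n=0$, $a_nG_n+b_n-\underline\nu_n+\overline\nu_n-\lambda_n=0$, $c_{nm}+\xi_{nm}+\zeta_{nm}-\lambda_n=0$ for $m\in\Omega_n\setminus\{n\}$, feasibility, and complementarity $0\le\underline\mu_n\perp D_n-\underline D_n\ge0$, $0\le\overline\mu_n\perp\overline D_n-D_n\ge0$, $0\le\underline\nu_n\perp G_n-\underline G_n\ge0$, $0\le\overline\nu_n\perp\overline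 G_n-G_n\ge0$, $0\le\xi_{nm}\perp\kappa_{mn}-q_{mn}\ge0$, $0\le\zeta_{nm}\perp-q_{mn}-q_{nm}\ge0$ for all $m\in\Omega_n\setminus\{n\}$. A Generalized Nash Equilibrium (GNE) is a profile such that for each $n$ there are multipliers with $KKT_n$ satisfied (equivalently, each agent's variables solve her problem given the others'). A Variational Equilibrium is a GNE whose multipliers can be chosen so that in addition $\zeta_{nm}=\zeta_{mn}$ for all $n$ and $m\in\Omega_n\setminus\{n\}$. *)

theory Defs
  imports Main "HOL.Real"
begin

text \<open>Parameters of the peer-to-peer energy market.
  Trades are encoded as q :: 'n => 'n => real, with q m n the quantity sent
  from m to n (only meaningful for neighbours m of n, m distinct from n).\<close>

record 'n market =
  nodes :: "'n set"
  root  :: 'n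
  nbr   :: "'n \<Rightarrow> 'n set"
  Dlo   :: "'n \<Rightarrow> real"
  Dhi   :: "'n \<Rightarrow> real"
  Glo   :: "'n \<Rightarrow> real"
  Ghi   :: "'n \<Rightarrow> real"
  kap   :: "'n \<Rightarrow> 'n \<Rightarrow> real"
  dG    :: "'n \<Rightarrow> real"
  ca    :: "'n \<Rightarrow> real"
  cb    :: "'n \<Rightarrow> real"
  cd    :: "'n \<Rightarrow> real"
  ua    :: "'n \<Rightarrow> real"
  ub    :: "'n \<Rightarrow> real"
  Dstar :: "'n \<Rightarrow> real"
  pref  :: "'n \<Rightarrow> 'n \<Rightarrow> real"

definition valid_market :: "'n market \<Rightarrow> bool" where
  "valid_market M \<longleftrightarrow>
     finite (nodes M) \<and> root M \<in> nodes M \<and>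
     (\<forall>n\<in>nodes M. n \<in> nbr M n \<and> nbr M n \<subseteq> nodes M) \<and>
     (\<forall>n\<in>nodes M. \<forall>m\<in>nodes M. m \<in> nbr M n \<longleftrightarrow> n \<in> nbr M m) \<and>
     (\<forall>n\<in>nodes M. n \<in> nbr M (root M)) \<and>
     (\<forall>n\<in>nodes M. 0 \<le> Dlo M n \<and> Dlo M n \<le> Dhi M n) \<and>
     (\<forall>n\<in>nodes M. 0 \<le> Glo M n \<and> Glo M n \<le> Ghi M n) \<and>
     (\<forall>n\<in>nodes M. \<forall>m\<in>nodes M. kap M n m = kap M m n \<and> 0 \<le> kap M n m) \<and>
     (\<forall>n\<in>nodes M. ca M n > 0 \<and> cb M n > 0 \<and> cd M n > 0 \<and> ua M n > 0 \<and> ub M n > 0) \<and>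
     (\<forall>n\<in>nodes M. \<forall>m\<in>nbr M n - {n}. pref M n m > 0)"

definition netimp :: "'n market \<Rightarrow> ('n \<Rightarrow> 'n \<Rightarrow> real) \<Rightarrow> 'n \<Rightarrow> real" where
  "netimp M q n = (\<Sum>m\<in>nbr M n - {n}. q m n)"

definition costG :: "'n market \<Rightarrow> 'n \<Rightarrow> real \<Rightarrow> real" where
  "costG M n g = ca M n * g\<^sup>2 / 2 + cb M n * g + cd M n"

definition util :: "'n market \<Rightarrow> 'n \<Rightarrow> real \<Rightarrow> real" where
  "util M n x = - ua M n * (x - Dstar M n)\<^sup>2 + ub M n"

definition costT :: "'n market \<Rightarrow> ('n \<Rightarrow> 'n \<Rightarrow> real) \<Rightarrow> 'n \<Rightarrow> real" where
  "costT M q n = (\<Sum>m\<in>nbr M n - {n}. pref M n m * q m n)"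

definition payoff :: "'n market \<Rightarrow> ('n \<Rightarrow> real) \<Rightarrow> ('n \<Rightarrow> real) \<Rightarrow> ('n \<Rightarrow> 'n \<Rightarrow> real) \<Rightarrow> 'n \<Rightarrow> real" where
  "payoff M D G q n = util M n (D n) - costG M n (G n) - costT M q n"

definition SW :: "'n market \<Rightarrow> ('n \<Rightarrow> real) \<Rightarrow> ('n \<Rightarrow> real) \<Rightarrow> ('n \<Rightarrow> 'n \<Rightarrow> real) \<Rightarrow> real" where
  "SW M D G q = (\<Sum>n\<in>nodes M. payoff M D G q n)"

definition feasibleP :: "'n market \<Rightarrow> ('n \<Rightarrow> real) \<Rightarrow> ('n \<Rightarrow> real) \<Rightarrow> ('n \<Rightarrow> 'n \<Rightarrow> real) \<Rightarrow> bool" where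
  "feasibleP M D G q \<longleftrightarrow>
     (\<forall>n\<in>nodes M. Dlo M n \<le> D n \<and> D n \<le> Dhi M n) \<and>
     (\<forall>n\<in>nodes M. Glo M n \<le> G n \<and> G n \<le> Ghi M n) \<and>
     (\<forall>n\<in>nodes M. \<forall>m\<in>nbr M n - {n}. q m n \<le> kap M m n) \<and>
     (\<forall>n\<in>nodes M. \<forall>m\<in>nbr M n - {n}. q m n + q n m \<le> 0) \<and>
     (\<forall>n\<in>nodes M. D n = G n + dG M n + netimp M q n)"

definition optimalP :: "'n market \<Rightarrow> ('n \<Rightarrow> real) \<Rightarrow> ('n \<Rightarrow> real) \<Rightarrow> ('n \<Rightarrow> 'n \<Rightarrow> real) \<Rightarrow> bool" where
  "optimalP M D G q \<longleftrightarrow> feasibleP M D G q \<and>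
     (\<forall>D' G' q'. feasibleP M D' G' q' \<longrightarrow> SW M D' G' q' \<le> SW M D G q)"

definition KKT :: "'n market \<Rightarrow> ('n \<Rightarrow> real) \<Rightarrow> ('n \<Rightarrow> real) \<Rightarrow> ('n \<Rightarrow> 'n \<Rightarrow> real) \<Rightarrow> 'n \<Rightarrow>
    real \<Rightarrow> real \<Rightarrow> real \<Rightarrow> real \<Rightarrow> ('n \<Rightarrow> real) \<Rightarrow> ('n \<Rightarrow> real) \<Rightarrow> real \<Rightarrow> bool" where
  "KKT M D G q n mul muh nul nuh xi zeta lam \<longleftrightarrow>
     2 * ua M n * (D n - Dstar M n) - mul + muh + lam = 0 \<and>
     ca M n * G n + cb M n - nul + nuh - lam = 0 \<and>
     (\<forall>m\<in>nbr M n - {n}. pref M n m + xi m + zeta m - lam = 0) \<and>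
     \<comment> \<open>feasibility\<close>
     Dlo M n \<le> D n \<and> D n \<le> Dhi M n \<and>
     Glo M n \<le> G n \<and> G n \<le> Ghi M n \<and>
     (\<forall>m\<in>nbr M n - {n}. q m n \<le> kap M m n) \<and>
     (\<forall>m\<in>nbr M n - {n}. q m n \<le> - q n m) \<and>
     D n = G n + dG M n + netimp M q n \<and>
     \<comment> \<open>sign and complementarity\<close>
     0 \<le> mul \<and> mul * (D n - Dlo M n) = 0 \<and>
     0 \<le> muh \<and> muh * (Dhi M n - D n) = 0 \<and>
     0 \<le> nul \<and> nul * (G n - Glo M n) = 0 \<and>
     0 \<le> nuh \<and> nuh * (Ghi M n - G n) = 0 \<and>
     (\<forall>m\<in>nbr M n - {n}. 0 \<le> xi m \<and> xi m * (kap M m n - q m n) = 0) \<and>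
     (\<forall>m\<in>nbr M n - {n}. 0 \<le> zeta m \<and> zeta m * (- q m n - q n m) = 0)"

definition GNE :: "'n market \<Rightarrow> ('n \<Rightarrow> real) \<Rightarrow> ('n \<Rightarrow> real) \<Rightarrow> ('n \<Rightarrow> 'n \<Rightarrow> real) \<Rightarrow> bool" where
  "GNE M D G q \<longleftrightarrow>
     (\<forall>n\<in>nodes M. \<exists>mul muh nul nuh xi zeta lam. KKT M D G q n mul muh nul nuh xi zeta lam)"

definition VE :: "'n market \<Rightarrow> ('n \<Rightarrow> real) \<Rightarrow> ('n \<Rightarrow> real) \<Rightarrow> ('n \<Rightarrow> 'n \<Rightarrow> real) \<Rightarrow> bool" where
  "VE M D G q \<longleftrightarrow>
     (\<exists>mul muh nul nuh :: 'n \<Rightarrow> real. \<exists>xi zeta :: 'n \<Rightarrow> 'n \<Rightarrow> real. \<exists>lam :: 'n \<Rightarrow> real.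
        (\<forall>n\<in>nodes M. KKT M D G q n (mul n) (muh n) (nul n) (nuh n) (xi n) (zeta n) (lam n)) \<and>
        (\<forall>n\<in>nodes M. \<forall>m\<in>nbr M n - {n}. zeta n m = zeta m n))"

end

theory Submission
  imports Defs
begin

definition lin :: "(('k \<Rightarrow> real) \<Rightarrow> real) \<Rightarrow> bool" where
  "lin f \<longleftrightarrow> (\<forall>x y t. f (\<lambda>k. x k - t * y k) = f x - t * f y)"

lemma farkas:
  fixes a :: "'i \<Rightarrow> ('k \<Rightarrow> real) \<Rightarrow> real" and c :: "('k \<Rightarrow> real) \<Rightarrow> real"
  assumes "finite I" "\<forall>i\<in>I. lin (a i)" "lin c" "\<forall>x. (\<forall>i\<in>I. a i x \<le> 0) \<longrightarrow> c x \<le> 0"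
  shows "\<exists>l. (\<forall>i\<in>I. 0 \<le> l i) \<and> (\<forall>x. c x = (\<Sum>i\<in>I. l i * a i x))"
  using assms
proof (induction I arbitrary: a c rule: finite_induct)
  case empty
  have "c x = 0" for x
  proof -
    have "c (\<lambda>k. x k - 2 * x k) = c x - 2 * c x" using empty(2) unfolding lin_def by blast
    moreover have "c (\<lambda>k. x k - 2 * x k) \<le> 0" "c x \<le> 0" using empty(3) by auto
    ultimately show ?thesis by linarith
  qed
  then show ?case by simp
next
  case (insert j J)
  show ?case
  proof (cases "\<forall>x. (\<forall>i\<in>J. a i x \<le> 0) \<longrightarrow> c x \<le> 0")
    case True
    then obtain l where l: "\<forall>i\<in>J. 0 \<le> l i" "\<forall>x. c x = (\<Sum>i\<in>J. l i * a i x)"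
      using insert by blast
    let ?l = "l(j := 0)"
    have "(\<Sum>i\<in>J. ?l i * a i x) = (\<Sum>i\<in>J. l i * a i x)" for x
      using insert(2) by (intro sum.cong) auto
    then show ?thesis using l insert(1,2)
      by (intro exI[of _ ?l]) auto
  next
    case False
    then obtain x0 where x0: "\<forall>i\<in>J. a i x0 \<le> 0" "c x0 > 0" by force
    define p where "p = a j x0"
    have pp: "p > 0"
    proof (rule ccontr)
      assume "\<not> p > 0"
      then have "c x0 \<le> 0" using insert(6) x0 p_def by auto
      then show False using x0 by simp
    qed
    define a' where "a' i x = a i x - (a i x0 / p) * a j x" for i x
    define c' where "c' x = c x - (c x0 / p) * a j x" for x
    have linj: "lin (a j)" using insert(4) by auto
    have la': "\<forall>i\<in>J. lin (a' i)"
    proof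
      fix i assume "i \<in> J"
      then have "lin (a i)" using insert(4) by auto
      then show "lin (a' i)" unfolding lin_def a'_def
      proof (intro allI)
        fix x y t
        assume h0: "\<forall>x y t. a i (\<lambda>k. x k - t * y k) = a i x - t * a i y"
        have e1: "a i (\<lambda>k. x k - t * y k) = a i x - t * a i y" using h0 by blast
        have e2: "a j (\<lambda>k. x k - t * y k) = a j x - t * a j y" using linj unfolding lin_def by blast
        show "a i (\<lambda>k. x k - t * y k) - a i x0 / p * a j (\<lambda>k. x k - t * y k) =
          a i x - a i x0 / p * a j x - t * (a i y - a i x0 / p * a j y)" unfolding e1 e2 by (simp add: algebra_simps)
      qed
    qed
    have lc': "lin c'" unfolding lin_def c'_def
    proof (intro allI)
      fix x y t
      have e1: "c (\<lambda>k. x k - t * y k) = c x - t * c y" using insert(5) unfolding lin_def by blast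
      have e2: "a j (\<lambda>k. x k - t * y k) = a j x - t * a j y" using linj unfolding lin_def by blast
      show "c (\<lambda>k. x k - t * y k) - c x0 / p * a j (\<lambda>k. x k - t * y k) =
          c x - c x0 / p * a j x - t * (c y - c x0 / p * a j y)" unfolding e1 e2 by (simp add: algebra_simps)
    qed
    have hyp: "\<forall>x. (\<forall>i\<in>J. a' i x \<le> 0) \<longrightarrow> c' x \<le> 0"
    proof (intro allI impI)
      fix x assume h: "\<forall>i\<in>J. a' i x \<le> 0"
      define y where "y = (\<lambda>k. x k - (a j x / p) * x0 k)"
      have ay: "a i y = a' i x" if "i \<in> insert j J" for i
      proof -
        have "lin (a i)" using insert(4) that by auto
        then have "a i y = a i x - (a j x / p) * a i x0" unfolding lin_def y_def by blast
        then show ?thesis unfolding a'_def by simp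
      qed
      have "a j y = a j x - (a j x / p) * a j x0" using linj unfolding lin_def y_def by blast
      then have ajy: "a j y = 0" using pp unfolding p_def by simp
      have "\<forall>i\<in>insert j J. a i y \<le> 0" using h ay ajy by auto
      then have "c y \<le> 0" using insert(6) by blast
      moreover have "c y = c x - (a j x / p) * c x0" using insert(5) unfolding lin_def y_def by blast
      then have "c y = c' x" unfolding c'_def by simp
      ultimately show "c' x \<le> 0" by simp
    qed
    obtain l where l: "\<forall>i\<in>J. 0 \<le> l i" "\<forall>x. c' x = (\<Sum>i\<in>J. l i * a' i x)"
      using insert(3)[OF la' lc' hyp] by blast
    define lj where "lj = (c x0 - (\<Sum>i\<in>J. l i * a i x0)) / p"
    have "(\<Sum>i\<in>J. l i * a i x0) \<le> 0" using l(1) x0(1) by (intro sum_nonpos) (simp add: mult_nonneg_nonpos)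
    then have lj0: "lj \<ge> 0" unfolding lj_def using pp x0(2) by simp
    let ?l = "l(j := lj)"
    have "c x = (\<Sum>i\<in>insert j J. ?l i * a i x)" for x
    proof -
      have s: "(\<Sum>i\<in>J. ?l i * a i x) = (\<Sum>i\<in>J. l i * a i x)"
        using insert(2) by (intro sum.cong) auto
      have "(\<Sum>i\<in>J. l i * a' i x) = (\<Sum>i\<in>J. l i * a i x) - (\<Sum>i\<in>J. l i * a i x0) / p * a j x"
      proof -
        have "(\<Sum>i\<in>J. l i * a' i x) = (\<Sum>i\<in>J. l i * a i x - (l i * a i x0) / p * a j x)"
          unfolding a'_def by (intro sum.cong) (auto simp: algebra_simps)
        also have "\<dots> = (\<Sum>i\<in>J. l i * a i x) - (\<Sum>i\<in>J. l i * a i x0) / p * a j x"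
          by (simp add: sum_subtractf sum_distrib_right sum_divide_distrib)
        finally show ?thesis .
      qed
      then have "c x = (\<Sum>i\<in>J. l i * a i x) - (\<Sum>i\<in>J. l i * a i x0) / p * a j x + (c x0 / p) * a j x"
        using l(2) unfolding c'_def by (metis diff_add_cancel)
      also have "\<dots> = lj * a j x + (\<Sum>i\<in>J. l i * a i x)" unfolding lj_def using pp by (simp add: field_simps)
      finally show ?thesis using s insert(1,2) by simp
    qed
    then show ?thesis using l(1) lj0 by (intro exI[of _ ?l]) auto
  qed
qed

lemma pair_sum_le:
  fixes z q q' :: "'n \<Rightarrow> 'n \<Rightarrow> real"
  assumes fin: "finite N" and sym: "\<forall>n\<in>N. \<forall>m\<in>N. m \<in> nb n \<longleftrightarrow> n \<in> nb m"
    and sub: "\<forall>n\<in>N. nb n \<subseteq> N"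
    and z: "\<forall>n\<in>N. \<forall>m\<in>nb n - {n}. z n m = z m n \<and> 0 \<le> z n m \<and> z n m * (- q m n - q n m) = 0 \<and> q' m n + q' n m \<le> 0"
  shows "(\<Sum>n\<in>N. \<Sum>m\<in>nb n - {n}. z n m * (q' m n - q m n)) \<le> 0"
proof -
  define P where "P = Sigma N (\<lambda>n. nb n - {n})"
  have finP: "finite P" unfolding P_def using fin sub by (auto intro!: finite_SigmaI intro: finite_subset)
  define f where "f = (\<lambda>(n,m). z n m * (q' m n - q m n))"
  have S: "(\<Sum>n\<in>N. \<Sum>m\<in>nb n - {n}. z n m * (q' m n - q m n)) = sum f P"
    unfolding P_def f_def using fin sub by (subst sum.Sigma) (auto intro: finite_subset)
  define sw where "sw = (\<lambda>(n::'n,m::'n). (m,n))"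
  have swP: "sw ` P = P"
  proof
    show "sw ` P \<subseteq> P" using sym sub unfolding P_def sw_def by auto
    show "P \<subseteq> sw ` P"
    proof
      fix x assume "x \<in> P"
      then obtain n m where x: "x = (n,m)" "n \<in> N" "m \<in> nb n - {n}" unfolding P_def by auto
      then have "(m,n) \<in> P" using sym sub unfolding P_def by auto
      moreover have "x = sw (m,n)" unfolding sw_def x by simp
      ultimately show "x \<in> sw ` P" by blast
    qed
  qed
  have inj: "inj_on sw P" unfolding sw_def inj_on_def by auto
  have "sum f P = sum (f \<circ> sw) P" using sum.reindex[OF inj, of f] swP by simp
  then have "2 * sum f P = (\<Sum>x\<in>P. f x + (f \<circ> sw) x)" by (simp add: sum.distrib)
  also have "\<dots> \<le> 0"
  proof (intro sum_nonpos)
    fix x assume "x \<in> P"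
    then obtain n m where x: "x = (n,m)" "n \<in> N" "m \<in> nb n - {n}" unfolding P_def by auto
    then have h: "z n m = z m n" "0 \<le> z n m" "z n m * (- q m n - q n m) = 0" "q' m n + q' n m \<le> 0"
      using z by blast+
    have "f x + (f \<circ> sw) x = z n m * (q' m n + q' n m) - z n m * (q m n + q n m)"
      unfolding f_def sw_def x using h(1) by (simp add: algebra_simps)
    also have "\<dots> = z n m * (q' m n + q' n m)" using h(3) by (simp add: algebra_simps)
    also have "\<dots> \<le> 0" using h(2,4) by (simp add: mult_nonneg_nonpos)
    finally show "f x + (f \<circ> sw) x \<le> 0" .
  qed
  finally show ?thesis using S by simp
qed


lemma node_bound:
  fixes M :: "'n market"
  assumes K: "KKT M D G q n mul muh nul nuh xi zeta lam"
    and f1: "Dlo M n \<le> D' n" "D' n \<le> Dhi M n" "Glo M n \<le> G' n" "G' n \<le> Ghi M n"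
    and f2: "\<forall>m\<in>nbr M n - {n}. q' m n \<le> kap M m n"
    and f3: "D' n = G' n + dG M n + netimp M q' n"
    and pos: "ua M n > 0" "ca M n > 0"
  shows "payoff M D' G' q' n - payoff M D G q n \<le> (\<Sum>m\<in>nbr M n - {n}. zeta m * (q' m n - q m n))"
proof -
  note k = K[unfolded KKT_def]
  let ?B = "nbr M n - {n}"
  have u: "util M n (D' n) - util M n (D n) \<le> - 2 * ua M n * (D n - Dstar M n) * (D' n - D n)"
  proof -
    have "util M n (D' n) - util M n (D n) = - 2 * ua M n * (D n - Dstar M n) * (D' n - D n) - ua M n * (D' n - D n)^2"
      unfolding util_def by (simp add: power2_eq_square algebra_simps)
    moreover have "ua M n * (D' n - D n)^2 \<ge> 0" using pos by simp
    ultimately show ?thesis by linarith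
  qed
  have g: "costG M n (G' n) - costG M n (G n) \<ge> (ca M n * G n + cb M n) * (G' n - G n)"
  proof -
    have "costG M n (G' n) - costG M n (G n) = (ca M n * G n + cb M n) * (G' n - G n) + ca M n * (G' n - G n)^2 / 2"
      unfolding costG_def by (simp add: power2_eq_square field_simps)
    moreover have "ca M n * (G' n - G n)^2 / 2 \<ge> 0" using pos by simp
    ultimately show ?thesis by linarith
  qed
  have t: "costT M q' n - costT M q n = (\<Sum>m\<in>?B. (lam - xi m - zeta m) * (q' m n - q m n))"
  proof -
    have "costT M q' n - costT M q n = (\<Sum>m\<in>?B. pref M n m * (q' m n - q m n))"
      unfolding costT_def by (simp add: sum_subtractf[symmetric] algebra_simps)
    also have "\<dots> = (\<Sum>m\<in>?B. (lam - xi m - zeta m) * (q' m n - q m n))"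
    proof (intro sum.cong refl)
      fix m assume "m \<in> ?B"
      then have "pref M n m + xi m + zeta m - lam = 0" using k by blast
      then have "pref M n m = lam - xi m - zeta m" by linarith
      then show "pref M n m * (q' m n - q m n) = (lam - xi m - zeta m) * (q' m n - q m n)" by simp
    qed
    finally show ?thesis .
  qed
  have xi: "(\<Sum>m\<in>?B. xi m * (q' m n - q m n)) \<le> 0"
  proof (intro sum_nonpos)
    fix m assume "m \<in> ?B"
    then have "0 \<le> xi m" "xi m * (kap M m n - q m n) = 0" "q' m n \<le> kap M m n" using k f2 by blast+
    then have "xi m * (q' m n - q m n) = xi m * (q' m n - kap M m n)" by (simp add: algebra_simps)
    also have "\<dots> \<le> 0" using \<open>0 \<le> xi m\<close> \<open>q' m n \<le> kap M m n\<close> by (simp add: mult_nonneg_nonpos)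
    finally show "xi m * (q' m n - q m n) \<le> 0" .
  qed
  have split: "(\<Sum>m\<in>?B. (lam - xi m - zeta m) * (q' m n - q m n)) =
     lam * (netimp M q' n - netimp M q n) - (\<Sum>m\<in>?B. xi m * (q' m n - q m n)) - (\<Sum>m\<in>?B. zeta m * (q' m n - q m n))"
    unfolding netimp_def by (simp add: sum_subtractf[symmetric] sum_distrib_left algebra_simps)
  have muD: "(- mul + muh) * (D' n - D n) \<le> 0"
  proof -
    have c: "mul * (D n - Dlo M n) = 0" "muh * (Dhi M n - D n) = 0" using k by blast+
    have "(- mul + muh) * (D' n - D n) = - mul * (D' n - Dlo M n) + muh * (D' n - Dhi M n)
       + mul * (D n - Dlo M n) + muh * (Dhi M n - D n)" by (simp add: algebra_simps)
    then have "(- mul + muh) * (D' n - D n) = - mul * (D' n - Dlo M n) + muh * (D' n - Dhi M n)"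
      using c by simp
    moreover have "mul * (D' n - Dlo M n) \<ge> 0" "muh * (D' n - Dhi M n) \<le> 0"
      using k f1 by (auto simp: mult_nonneg_nonpos)
    ultimately show ?thesis by linarith
  qed
  have nuG: "(- nul + nuh) * (G' n - G n) \<le> 0"
  proof -
    have c: "nul * (G n - Glo M n) = 0" "nuh * (Ghi M n - G n) = 0" using k by blast+
    have "(- nul + nuh) * (G' n - G n) = - nul * (G' n - Glo M n) + nuh * (G' n - Ghi M n)
       + nul * (G n - Glo M n) + nuh * (Ghi M n - G n)" by (simp add: algebra_simps)
    then have "(- nul + nuh) * (G' n - G n) = - nul * (G' n - Glo M n) + nuh * (G' n - Ghi M n)"
      using c by simp
    moreover have "nul * (G' n - Glo M n) \<ge> 0" "nuh * (G' n - Ghi M n) \<le> 0"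
      using k f1 by (auto simp: mult_nonneg_nonpos)
    ultimately show ?thesis by linarith
  qed
  have k1: "2 * ua M n * (D n - Dstar M n) - mul + muh + lam = 0" using k by blast
  have k2: "ca M n * G n + cb M n - nul + nuh - lam = 0" using k by blast
  have k3: "D n = G n + dG M n + netimp M q n" using k by blast
  have e1: "- 2 * ua M n * (D n - Dstar M n) = - mul + muh + lam" using k1 by linarith
  have e2: "ca M n * G n + cb M n = nul - nuh + lam" using k2 by linarith
  have bal: "D' n - D n - (G' n - G n) - (netimp M q' n - netimp M q n) = 0" using f3 k3 by linarith
  have "payoff M D' G' q' n - payoff M D G q n =
     (util M n (D' n) - util M n (D n)) - (costG M n (G' n) - costG M n (G n)) - (costT M q' n - costT M q n)"
    unfolding payoff_def by simp
  also have "\<dots> \<le> - 2 * ua M n * (D n - Dstar M n) * (D' n - D n) - (ca M n * G n + cb M n) * (G' n - G n)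
       - (costT M q' n - costT M q n)" using u g by linarith
  also have "\<dots> = (- mul + muh) * (D' n - D n) + (- nul + nuh) * (G' n - G n)
      + lam * (D' n - D n - (G' n - G n) - (netimp M q' n - netimp M q n))
      + (\<Sum>m\<in>?B. xi m * (q' m n - q m n)) + (\<Sum>m\<in>?B. zeta m * (q' m n - q m n))"
    unfolding t split e1 e2 by (simp add: algebra_simps)
  also have "\<dots> \<le> (\<Sum>m\<in>?B. zeta m * (q' m n - q m n))" using muD nuG xi bal by simp
  finally show ?thesis .
qed


lemma KKT_feas:
  assumes "KKT M D G q n a b c d xi z l"
  shows "Dlo M n \<le> D n" "D n \<le> Dhi M n" "Glo M n \<le> G n" "G n \<le> Ghi M n"
    "D n = G n + dG M n + netimp M q n" "\<forall>m\<in>nbr M n - {n}. q m n \<le> kap M m n"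
    "\<forall>m\<in>nbr M n - {n}. q m n \<le> - q n m"
  using assms unfolding KKT_def by simp_all

lemma ve_opt:
  fixes M :: "'n market"
  assumes vm: "valid_market M" and ve: "VE M D G q"
  shows "optimalP M D G q"
proof -
  note v = vm[unfolded valid_market_def]
  obtain mul muh nul nuh xi zeta lam where
    K: "\<forall>n\<in>nodes M. KKT M D G q n (mul n) (muh n) (nul n) (nuh n) (xi n) (zeta n) (lam n)"
    and zs: "\<forall>n\<in>nodes M. \<forall>m\<in>nbr M n - {n}. zeta n m = zeta m n"
    using ve unfolding VE_def by blast
  have feas: "feasibleP M D G q"
    unfolding feasibleP_def
  proof (intro conjI ballI)
    fix n assume n: "n \<in> nodes M"
    note k = KKT_feas[OF K[rule_format, OF n]]
    show "Dlo M n \<le> D n" "D n \<le> Dhi M n" "Glo M n \<le> G n" "G n \<le> Ghi M n"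
      "D n = G n + dG M n + netimp M q n" using k by blast+
    fix m assume m: "m \<in> nbr M n - {n}"
    show "q m n \<le> kap M m n" using k(6) m by blast
    have "q m n \<le> - q n m" using k(7) m by blast
    then show "q m n + q n m \<le> 0" by simp
  qed
  have "SW M D' G' q' \<le> SW M D G q" if f: "feasibleP M D' G' q'" for D' G' q'
  proof -
    note f = f[unfolded feasibleP_def]
    have "SW M D' G' q' - SW M D G q = (\<Sum>n\<in>nodes M. payoff M D' G' q' n - payoff M D G q n)"
      unfolding SW_def by (simp add: sum_subtractf)
    also have "\<dots> \<le> (\<Sum>n\<in>nodes M. \<Sum>m\<in>nbr M n - {n}. zeta n m * (q' m n - q m n))"
    proof (intro sum_mono)
      fix n assume n: "n \<in> nodes M"
      show "payoff M D' G' q' n - payoff M D G q n \<le> (\<Sum>m\<in>nbr M n - {n}. zeta n m * (q' m n - q m n))"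
      proof (rule node_bound[OF K[rule_format, OF n]])
        show "Dlo M n \<le> D' n" "D' n \<le> Dhi M n" "Glo M n \<le> G' n" "G' n \<le> Ghi M n"
          "D' n = G' n + dG M n + netimp M q' n" using f n by blast+
        show "\<forall>m\<in>nbr M n - {n}. q' m n \<le> kap M m n" using f n by blast
        show "ua M n > 0" "ca M n > 0" using v n by blast+
      qed
    qed
    also have "\<dots> \<le> 0"
    proof (rule pair_sum_le)
      show "finite (nodes M)" "\<forall>n\<in>nodes M. \<forall>m\<in>nodes M. m \<in> nbr M n \<longleftrightarrow> n \<in> nbr M m"
        "\<forall>n\<in>nodes M. nbr M n \<subseteq> nodes M" using v by blast+
      show "\<forall>n\<in>nodes M. \<forall>m\<in>nbr M n - {n}. zeta n m = zeta m n \<and> 0 \<le> zeta n m \<and>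
          zeta n m * (- q m n - q n m) = 0 \<and> q' m n + q' n m \<le> 0"
      proof (intro ballI)
        fix n m assume n: "n \<in> nodes M" and m: "m \<in> nbr M n - {n}"
        note k = K[rule_format, OF n, unfolded KKT_def]
        have "0 \<le> zeta n m \<and> zeta n m * (- q m n - q n m) = 0" using k m by blast
        moreover have "q' m n + q' n m \<le> 0" using f n m by blast
        ultimately show "zeta n m = zeta m n \<and> 0 \<le> zeta n m \<and>
          zeta n m * (- q m n - q n m) = 0 \<and> q' m n + q' n m \<le> 0" using zs n m by blast
      qed
    qed
    finally show ?thesis by simp
  qed
  then show ?thesis unfolding optimalP_def using feas by blast
qed


datatype 'n var = VD 'n | VG 'n | VQ 'n 'n
datatype ctyp = TDlo | TDhi | TGlo | TGhi | TB | TBn | TK | TZ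

lemma UNIV_ctyp: "(UNIV :: ctyp set) = {TDlo, TDhi, TGlo, TGhi, TB, TBn, TK, TZ}"
  using ctyp.exhaust by auto

lemma finite_ctyp[simp]: "finite (UNIV :: ctyp set)" unfolding UNIV_ctyp by simp

fun acon :: "'n market \<Rightarrow> ('n\<Rightarrow>real) \<Rightarrow> ('n\<Rightarrow>real) \<Rightarrow> ('n\<Rightarrow>'n\<Rightarrow>real) \<Rightarrow> ctyp \<times> 'n \<times> 'n \<Rightarrow> ('n var \<Rightarrow> real) \<Rightarrow> real" where
  "acon M D G q (TDlo, n, m) d = (if m = n \<and> D n = Dlo M n then - d (VD n) else 0)"
| "acon M D G q (TDhi, n, m) d = (if m = n \<and> D n = Dhi M n then d (VD n) else 0)"
| "acon M D G q (TGlo, n, m) d = (if m = n \<and> G n = Glo M n then - d (VG n) else 0)"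
| "acon M D G q (TGhi, n, m) d = (if m = n \<and> G n = Ghi M n then d (VG n) else 0)"
| "acon M D G q (TB, n, m) d = (if m = n then d (VD n) - d (VG n) - (\<Sum>m'\<in>nbr M n - {n}. d (VQ m' n)) else 0)"
| "acon M D G q (TBn, n, m) d = (if m = n then - (d (VD n) - d (VG n) - (\<Sum>m'\<in>nbr M n - {n}. d (VQ m' n))) else 0)"
| "acon M D G q (TK, n, m) d = (if m \<in> nbr M n - {n} \<and> q m n = kap M m n then d (VQ m n) else 0)"
| "acon M D G q (TZ, n, m) d = (if m \<in> nbr M n - {n} \<and> q m n + q n m = 0 then d (VQ m n) + d (VQ n m) else 0)"

definition cgrad :: "'n market \<Rightarrow> ('n\<Rightarrow>real) \<Rightarrow> ('n\<Rightarrow>real) \<Rightarrow> ('n\<Rightarrow>'n\<Rightarrow>real) \<Rightarrow> ('n var \<Rightarrow> real) \<Rightarrow> real" where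
  "cgrad M D G q d = (\<Sum>n\<in>nodes M. - 2 * ua M n * (D n - Dstar M n) * d (VD n) - (ca M n * G n + cb M n) * d (VG n)
      - (\<Sum>m\<in>nbr M n - {n}. pref M n m * d (VQ m n)))"

lemma lin_acon: "lin (acon M D G q i)"
proof -
  obtain t n m where i: "i = (t, n, m)" by (cases i) auto
  show ?thesis unfolding i lin_def
    by (cases t) (auto simp: sum_subtractf sum_distrib_left algebra_simps)
qed

lemma lin_cgrad: "lin (cgrad M D G q)"
  unfolding lin_def cgrad_def
  by (auto simp: sum_subtractf sum_distrib_left algebra_simps sum.distrib intro!: sum.cong)


lemma dir_lemma:
  fixes M :: "'n market"
  assumes vm: "valid_market M" and opt: "optimalP M D G q"
    and hd: "\<forall>i\<in>UNIV \<times> nodes M \<times> nodes M. acon M D G q i d \<le> 0"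
  shows "cgrad M D G q d \<le> 0"
proof (rule ccontr)
  assume "\<not> cgrad M D G q d \<le> 0"
  then have cd: "cgrad M D G q d > 0" by simp
  note v = vm[unfolded valid_market_def]
  define N where "N = nodes M"
  define B where "B n = nbr M n - {n}" for n
  have finN: "finite N" using v N_def by blast
  have subN: "\<And>n. n \<in> N \<Longrightarrow> nbr M n \<subseteq> N" using v N_def by blast
  have finB: "\<And>n. n \<in> N \<Longrightarrow> finite (B n)" unfolding B_def using finN subN finite_subset by blast
  have symB: "\<And>n m. n \<in> N \<Longrightarrow> m \<in> B n \<Longrightarrow> m \<in> N \<and> n \<in> B m"
  proof -
    fix n m assume n: "n \<in> N" and m: "m \<in> B n"
    then have mN: "m \<in> N" using subN B_def by blast
    then have "n \<in> nbr M m" using v n m N_def B_def by blast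
    then show "m \<in> N \<and> n \<in> B m" using mN m B_def by auto
  qed
  have fz: "feasibleP M D G q" and optz: "\<And>D' G' q'. feasibleP M D' G' q' \<Longrightarrow> SW M D' G' q' \<le> SW M D G q"
    using opt unfolding optimalP_def by blast+
  note fz' = fz[unfolded feasibleP_def, folded N_def B_def]
  have hD1: "\<And>n. n \<in> N \<Longrightarrow> D n = Dlo M n \<Longrightarrow> d (VD n) \<ge> 0"
    using hd N_def by (metis UNIV_I acon.simps(1) mem_Sigma_iff neg_le_0_iff_le)
  have hD2: "\<And>n. n \<in> N \<Longrightarrow> D n = Dhi M n \<Longrightarrow> d (VD n) \<le> 0"
    using hd N_def by (metis UNIV_I acon.simps(2) mem_Sigma_iff)
  have hG1: "\<And>n. n \<in> N \<Longrightarrow> G n = Glo M n \<Longrightarrow> d (VG n) \<ge> 0"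
    using hd N_def by (metis UNIV_I acon.simps(3) mem_Sigma_iff neg_le_0_iff_le)
  have hG2: "\<And>n. n \<in> N \<Longrightarrow> G n = Ghi M n \<Longrightarrow> d (VG n) \<le> 0"
    using hd N_def by (metis UNIV_I acon.simps(4) mem_Sigma_iff)
  have hB: "\<And>n. n \<in> N \<Longrightarrow> d (VD n) - d (VG n) - (\<Sum>m\<in>B n. d (VQ m n)) = 0"
  proof -
    fix n assume n: "n \<in> N"
    have "(TB, n, n) \<in> UNIV \<times> nodes M \<times> nodes M" "(TBn, n, n) \<in> UNIV \<times> nodes M \<times> nodes M" using n N_def by auto
    then have "acon M D G q (TB, n, n) d \<le> 0" "acon M D G q (TBn, n, n) d \<le> 0" using hd by blast+
    then show "d (VD n) - d (VG n) - (\<Sum>m\<in>B n. d (VQ m n)) = 0" unfolding B_def by simp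
  qed
  have hK: "\<And>n m. n \<in> N \<Longrightarrow> m \<in> B n \<Longrightarrow> q m n = kap M m n \<Longrightarrow> d (VQ m n) \<le> 0"
  proof -
    fix n m assume n: "n \<in> N" and m: "m \<in> B n" and a: "q m n = kap M m n"
    have "(TK, n, m) \<in> UNIV \<times> nodes M \<times> nodes M" using n symB[OF n m] N_def by auto
    then have "acon M D G q (TK, n, m) d \<le> 0" using hd by blast
    then show "d (VQ m n) \<le> 0" using m a B_def by simp
  qed
  have hZ: "\<And>n m. n \<in> N \<Longrightarrow> m \<in> B n \<Longrightarrow> q m n + q n m = 0 \<Longrightarrow> d (VQ m n) + d (VQ n m) \<le> 0"
  proof -
    fix n m assume n: "n \<in> N" and m: "m \<in> B n" and a: "q m n + q n m = 0"
    have "(TZ, n, m) \<in> UNIV \<times> nodes M \<times> nodes M" using n symB[OF n m] N_def by auto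
    then have "acon M D G q (TZ, n, m) d \<le> 0" using hd by blast
    then show "d (VQ m n) + d (VQ n m) \<le> 0" using m a B_def by simp
  qed
  define Bd where "Bd = (\<Sum>n\<in>N. \<bar>d (VD n)\<bar> + \<bar>d (VG n)\<bar> + (\<Sum>m\<in>B n. \<bar>d (VQ m n)\<bar>))"
  have termle: "\<And>n. n \<in> N \<Longrightarrow> \<bar>d (VD n)\<bar> + \<bar>d (VG n)\<bar> + (\<Sum>m\<in>B n. \<bar>d (VQ m n)\<bar>) \<le> Bd"
    unfolding Bd_def using finN by (intro member_le_sum) (auto intro: sum_nonneg)
  have Bd0: "Bd \<ge> 0" unfolding Bd_def by (intro sum_nonneg add_nonneg_nonneg) (auto intro: sum_nonneg)
  have bD: "\<And>n. n \<in> N \<Longrightarrow> \<bar>d (VD n)\<bar> \<le> Bd"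
  proof -
    fix n assume n: "n \<in> N"
    have "(\<Sum>m\<in>B n. \<bar>d (VQ m n)\<bar>) \<ge> 0" by (intro sum_nonneg) auto
    then show "\<bar>d (VD n)\<bar> \<le> Bd" using termle[OF n] by linarith
  qed
  have bG: "\<And>n. n \<in> N \<Longrightarrow> \<bar>d (VG n)\<bar> \<le> Bd"
  proof -
    fix n assume n: "n \<in> N"
    have "(\<Sum>m\<in>B n. \<bar>d (VQ m n)\<bar>) \<ge> 0" by (intro sum_nonneg) auto
    then show "\<bar>d (VG n)\<bar> \<le> Bd" using termle[OF n] by linarith
  qed
  have bQ: "\<And>n m. n \<in> N \<Longrightarrow> m \<in> B n \<Longrightarrow> \<bar>d (VQ m n)\<bar> \<le> Bd"
  proof -
    fix n m assume n: "n \<in> N" and m: "m \<in> B n"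
    have "\<bar>d (VQ m n)\<bar> \<le> (\<Sum>m\<in>B n. \<bar>d (VQ m n)\<bar>)"
      using finB[OF n] m by (intro member_le_sum) auto
    then show "\<bar>d (VQ m n)\<bar> \<le> Bd" using termle[OF n] by linarith
  qed
  define P where "P = Sigma N B"
  have finP: "finite P" unfolding P_def using finN finB by auto
  define Sl where "Sl = ((\<lambda>n. D n - Dlo M n) ` N \<union> (\<lambda>n. Dhi M n - D n) ` N \<union> (\<lambda>n. G n - Glo M n) ` N
     \<union> (\<lambda>n. Ghi M n - G n) ` N \<union> (\<lambda>(n,m). kap M m n - q m n) ` P \<union> (\<lambda>(n,m). - (q m n + q n m)) ` P) \<inter> {0<..}"
  have finSl: "finite Sl" unfolding Sl_def using finN finP by auto
  define dl where "dl = Min (insert 1 Sl)"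
  have dl0: "dl > 0" unfolding dl_def using finSl by (subst Min_gr_iff) (auto simp: Sl_def)
  have dlle: "\<And>s. s \<in> Sl \<Longrightarrow> dl \<le> s" unfolding dl_def using finSl by auto
  have sl1: "\<And>n. n \<in> N \<Longrightarrow> D n - Dlo M n > 0 \<Longrightarrow> dl \<le> D n - Dlo M n" by (rule dlle) (auto simp: Sl_def)
  have sl2: "\<And>n. n \<in> N \<Longrightarrow> Dhi M n - D n > 0 \<Longrightarrow> dl \<le> Dhi M n - D n" by (rule dlle) (auto simp: Sl_def)
  have sl3: "\<And>n. n \<in> N \<Longrightarrow> G n - Glo M n > 0 \<Longrightarrow> dl \<le> G n - Glo M n" by (rule dlle) (auto simp: Sl_def)
  have sl4: "\<And>n. n \<in> N \<Longrightarrow> Ghi M n - G n > 0 \<Longrightarrow> dl \<le> Ghi M n - G n" by (rule dlle) (auto simp: Sl_def)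
  have sl5: "\<And>n m. n \<in> N \<Longrightarrow> m \<in> B n \<Longrightarrow> kap M m n - q m n > 0 \<Longrightarrow> dl \<le> kap M m n - q m n"
  proof -
    fix n m assume "n \<in> N" "m \<in> B n" "kap M m n - q m n > 0"
    then have "kap M m n - q m n \<in> Sl" unfolding Sl_def P_def by (auto intro!: image_eqI[where x="(n,m)"])
    then show "dl \<le> kap M m n - q m n" by (rule dlle)
  qed
  have sl6: "\<And>n m. n \<in> N \<Longrightarrow> m \<in> B n \<Longrightarrow> - (q m n + q n m) > 0 \<Longrightarrow> dl \<le> - (q m n + q n m)"
  proof -
    fix n m assume "n \<in> N" "m \<in> B n" "- (q m n + q n m) > 0"
    then have "- (q m n + q n m) \<in> Sl" unfolding Sl_def P_def by (auto intro!: image_eqI[where x="(n,m)"])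
    then show "dl \<le> - (q m n + q n m)" by (rule dlle)
  qed
  define Qd where "Qd = (\<Sum>n\<in>N. ua M n * (d (VD n))^2 + ca M n * (d (VG n))^2 / 2)"
  have Qd0: "Qd \<ge> 0" unfolding Qd_def
  proof (intro sum_nonneg add_nonneg_nonneg)
    fix n assume "n \<in> N"
    then have "ua M n > 0" "ca M n > 0" using v N_def by auto
    then show "ua M n * (d (VD n))^2 \<ge> 0" "ca M n * (d (VG n))^2 / 2 \<ge> 0" by simp_all
  qed
  define e where "e = min (dl / (4 * (Bd + 1))) (cgrad M D G q d / (Qd + 1))"
  have e0: "e > 0" unfolding e_def using dl0 Bd0 cd Qd0 by auto
  have eB: "e * Bd \<le> dl / 4"
  proof -
    have "e * Bd \<le> dl / (4 * (Bd + 1)) * Bd" unfolding e_def using Bd0 by (intro mult_right_mono) auto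
    also have "\<dots> \<le> dl / 4" using Bd0 dl0 by (simp add: field_simps)
    finally show ?thesis .
  qed
  have ebound: "\<And>x. \<bar>x\<bar> \<le> Bd \<Longrightarrow> \<bar>e * x\<bar> \<le> dl / 4"
  proof -
    fix x :: real assume "\<bar>x\<bar> \<le> Bd"
    then have "\<bar>e * x\<bar> \<le> e * Bd" using e0 by (simp add: abs_mult mult_left_mono)
    then show "\<bar>e * x\<bar> \<le> dl / 4" using eB by simp
  qed
  have eQ: "e * Qd < cgrad M D G q d"
  proof -
    have "e * Qd \<le> cgrad M D G q d / (Qd + 1) * Qd" unfolding e_def using Qd0 by (intro mult_right_mono) auto
    also have "\<dots> < cgrad M D G q d" using Qd0 cd by (simp add: field_simps)
    finally show ?thesis .
  qed
  define D' where "D' n = D n + e * d (VD n)" for n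
  define G' where "G' n = G n + e * d (VG n)" for n
  define q' where "q' m n = q m n + e * d (VQ m n)" for m n
  have net: "\<And>n. netimp M q' n = netimp M q n + e * (\<Sum>m\<in>B n. d (VQ m n))"
    unfolding netimp_def q'_def B_def by (simp add: sum.distrib sum_distrib_left)
  have feas': "feasibleP M D' G' q'"
    unfolding feasibleP_def N_def[symmetric] B_def[symmetric]
  proof (intro conjI ballI)
    fix n assume n: "n \<in> N"
    have a: "\<bar>e * d (VD n)\<bar> \<le> dl / 4" "\<bar>e * d (VG n)\<bar> \<le> dl / 4" using ebound bD bG n by auto
    have f: "Dlo M n \<le> D n" "D n \<le> Dhi M n" "Glo M n \<le> G n" "G n \<le> Ghi M n"
      "D n = G n + dG M n + netimp M q n" using fz' n by blast+
    show "Dlo M n \<le> D' n"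
    proof (cases "D n = Dlo M n")
      case True then show ?thesis using hD1[OF n] e0 D'_def by simp
    next
      case False then show ?thesis using sl1[OF n] f a dl0 D'_def by force
    qed
    show "D' n \<le> Dhi M n"
    proof (cases "D n = Dhi M n")
      case True then show ?thesis using hD2[OF n] less_imp_le[OF e0] D'_def by (simp add: mult_nonneg_nonpos)
    next
      case False then show ?thesis using sl2[OF n] f a dl0 D'_def by force
    qed
    show "Glo M n \<le> G' n"
    proof (cases "G n = Glo M n")
      case True then show ?thesis using hG1[OF n] e0 G'_def by simp
    next
      case False then show ?thesis using sl3[OF n] f a dl0 G'_def by force
    qed
    show "G' n \<le> Ghi M n"
    proof (cases "G n = Ghi M n")
      case True then show ?thesis using hG2[OF n] less_imp_le[OF e0] G'_def by (simp add: mult_nonneg_nonpos)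
    next
      case False then show ?thesis using sl4[OF n] f a dl0 G'_def by force
    qed
    show "D' n = G' n + dG M n + netimp M q' n"
      using f(5) hB[OF n] net[of n] unfolding D'_def G'_def by (simp add: algebra_simps)
  next
    fix n m assume n: "n \<in> N" and m: "m \<in> B n"
    have mN: "m \<in> N" and nm: "n \<in> B m" using symB[OF n m] by auto
    have a: "\<bar>e * d (VQ m n)\<bar> \<le> dl / 4" "\<bar>e * d (VQ n m)\<bar> \<le> dl / 4"
      using ebound bQ n m mN nm by auto
    have f: "q m n \<le> kap M m n" "q m n + q n m \<le> 0" using fz' n m by blast+
    show "q' m n \<le> kap M m n"
    proof (cases "q m n = kap M m n")
      case True then show ?thesis using hK[OF n m] less_imp_le[OF e0] q'_def by (simp add: mult_nonneg_nonpos)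
    next
      case False then show ?thesis using sl5[OF n m] f a dl0 q'_def by force
    qed
    show "q' m n + q' n m \<le> 0"
    proof (cases "q m n + q n m = 0")
      case True
      have "e * (d (VQ m n) + d (VQ n m)) \<le> 0" using hZ[OF n m True] less_imp_le[OF e0] by (simp add: mult_nonneg_nonpos)
      then show ?thesis using True q'_def by (simp add: algebra_simps)
    next
      case False then show ?thesis using sl6[OF n m] f a dl0 q'_def by force
    qed
  qed
  have pn: "\<And>n. payoff M D' G' q' n = payoff M D G q n
     + e * (- 2 * ua M n * (D n - Dstar M n) * d (VD n) - (ca M n * G n + cb M n) * d (VG n)
      - (\<Sum>m\<in>nbr M n - {n}. pref M n m * d (VQ m n)))
     - e^2 * (ua M n * (d (VD n))^2 + ca M n * (d (VG n))^2 / 2)"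
  proof -
    fix n
    have t: "costT M q' n = costT M q n + e * (\<Sum>m\<in>nbr M n - {n}. pref M n m * d (VQ m n))"
      unfolding costT_def q'_def by (simp add: sum.distrib sum_distrib_left algebra_simps)
    show "?thesis n" unfolding payoff_def t util_def costG_def D'_def G'_def
      by (simp add: power2_eq_square field_simps)
  qed
  define gn where "gn n = - 2 * ua M n * (D n - Dstar M n) * d (VD n) - (ca M n * G n + cb M n) * d (VG n)
      - (\<Sum>m\<in>nbr M n - {n}. pref M n m * d (VQ m n))" for n
  define Qn where "Qn n = ua M n * (d (VD n))^2 + ca M n * (d (VG n))^2 / 2" for n
  have cg: "cgrad M D G q d = sum gn N" unfolding cgrad_def gn_def N_def ..
  have Qd': "Qd = sum Qn N" unfolding Qd_def Qn_def ..
  have pn': "\<And>n. payoff M D' G' q' n = payoff M D G q n + e * gn n - e^2 * Qn n"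
    unfolding gn_def Qn_def by (rule pn)
  have "SW M D' G' q' = SW M D G q + e * cgrad M D G q d - e^2 * Qd"
    unfolding SW_def pn' cg Qd' N_def[symmetric]
    by (simp only: sum.distrib sum_subtractf sum_distrib_left)
  moreover have "e^2 * Qd < e * cgrad M D G q d" using eQ e0 by (simp add: power2_eq_square)
  ultimately have "SW M D' G' q' > SW M D G q" by simp
  then show False using optz[OF feas'] by simp
qed


lemma sum_single:
  assumes "finite A" "a \<in> A" "\<And>x. x \<in> A \<Longrightarrow> x \<noteq> a \<Longrightarrow> f x = 0"
  shows "sum f A = f a"
proof -
  have "sum f A = f a + sum f (A - {a})" using assms by (simp add: sum.remove)
  also have "sum f (A - {a}) = 0" using assms by (intro sum.neutral) auto
  finally show ?thesis by simp
qed

definition ev :: "'n var \<Rightarrow> 'n var \<Rightarrow> real" where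
  "ev k = (\<lambda>v. if v = k then 1 else 0)"

lemma test_VD:
  fixes M :: "'n market"
  assumes finN: "finite (nodes M)" and n0: "n0 \<in> nodes M"
  shows "cgrad M D G q (ev (VD n0)) = - 2 * ua M n0 * (D n0 - Dstar M n0)"
  unfolding cgrad_def ev_def
  by (subst sum_single[where a=n0]) (auto simp: finN n0)

lemma test_VG:
  fixes M :: "'n market"
  assumes finN: "finite (nodes M)" and n0: "n0 \<in> nodes M"
  shows "cgrad M D G q (ev (VG n0)) = - (ca M n0 * G n0 + cb M n0)"
  unfolding cgrad_def ev_def
  by (subst sum_single[where a=n0]) (auto simp: finN n0)

lemma test_VQ:
  fixes M :: "'n market"
  assumes finN: "finite (nodes M)" and n0: "n0 \<in> nodes M" and m0: "m0 \<in> nbr M n0 - {n0}"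
    and finB: "finite (nbr M n0)"
  shows "cgrad M D G q (ev (VQ m0 n0)) = - pref M n0 m0"
proof -
  define F where "F n = - 2 * ua M n * (D n - Dstar M n) * ev (VQ m0 n0) (VD n) - (ca M n * G n + cb M n) * ev (VQ m0 n0) (VG n)
      - (\<Sum>m\<in>nbr M n - {n}. pref M n m * ev (VQ m0 n0) (VQ m n))" for n
  have "cgrad M D G q (ev (VQ m0 n0)) = sum F (nodes M)" unfolding cgrad_def F_def ..
  also have "\<dots> = F n0"
  proof (rule sum_single[OF finN n0])
    fix x assume "x \<in> nodes M" "x \<noteq> n0"
    then show "F x = 0" unfolding F_def ev_def by (simp add: sum.neutral)
  qed
  also have "F n0 = - (\<Sum>m\<in>nbr M n0 - {n0}. pref M n0 m * ev (VQ m0 n0) (VQ m n0))"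
    unfolding F_def ev_def by simp
  also have "(\<Sum>m\<in>nbr M n0 - {n0}. pref M n0 m * ev (VQ m0 n0) (VQ m n0)) = pref M n0 m0"
  proof (rule trans[OF sum_single[where a=m0]])
    show "finite (nbr M n0 - {n0})" using finB by simp
    show "m0 \<in> nbr M n0 - {n0}" by (rule m0)
    show "pref M n0 x * ev (VQ m0 n0) (VQ x n0) = 0" if "x \<noteq> m0" for x using that unfolding ev_def by simp
    show "pref M n0 m0 * ev (VQ m0 n0) (VQ m0 n0) = pref M n0 m0" unfolding ev_def by simp
  qed
  finally show ?thesis .
qed


lemma rhs_VD:
  fixes M :: "'n market"
  assumes finN: "finite N" and n0: "n0 \<in> N"
  shows "(\<Sum>i\<in>UNIV \<times> N \<times> N. l i * acon M D G q i (ev (VD n0))) =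
    (if D n0 = Dlo M n0 then - l (TDlo,n0,n0) else 0) + (if D n0 = Dhi M n0 then l (TDhi,n0,n0) else 0)
    + l (TB,n0,n0) - l (TBn,n0,n0)"
proof -
  let ?S = "{(TDlo,n0,n0), (TDhi,n0,n0), (TB,n0,n0), (TBn,n0,n0)}"
  have "(\<Sum>i\<in>UNIV \<times> N \<times> N. l i * acon M D G q i (ev (VD n0))) = (\<Sum>i\<in>?S. l i * acon M D G q i (ev (VD n0)))"
  proof (rule sum.mono_neutral_right)
    show "finite ((UNIV :: ctyp set) \<times> N \<times> N)" using finN by (intro finite_cartesian_product) auto
    show "?S \<subseteq> UNIV \<times> N \<times> N" using n0 by auto
    show "\<forall>i\<in>UNIV \<times> N \<times> N - ?S. l i * acon M D G q i (ev (VD n0)) = 0"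
    proof
      fix i assume i: "i \<in> UNIV \<times> N \<times> N - ?S"
      obtain t n m where tnm: "i = (t,n,m)" by (cases i) auto
      show "l i * acon M D G q i (ev (VD n0)) = 0"
        using i unfolding tnm by (cases t) (auto simp: ev_def)
    qed
  qed
  also have "\<dots> = (if D n0 = Dlo M n0 then - l (TDlo,n0,n0) else 0) + (if D n0 = Dhi M n0 then l (TDhi,n0,n0) else 0)
    + l (TB,n0,n0) - l (TBn,n0,n0)"
    by (simp add: ev_def)
  finally show ?thesis .
qed

lemma rhs_VG:
  fixes M :: "'n market"
  assumes finN: "finite N" and n0: "n0 \<in> N"
  shows "(\<Sum>i\<in>UNIV \<times> N \<times> N. l i * acon M D G q i (ev (VG n0))) =
    (if G n0 = Glo M n0 then - l (TGlo,n0,n0) else 0) + (if G n0 = Ghi M n0 then l (TGhi,n0,n0) else 0)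
    - l (TB,n0,n0) + l (TBn,n0,n0)"
proof -
  let ?S = "{(TGlo,n0,n0), (TGhi,n0,n0), (TB,n0,n0), (TBn,n0,n0)}"
  have "(\<Sum>i\<in>UNIV \<times> N \<times> N. l i * acon M D G q i (ev (VG n0))) = (\<Sum>i\<in>?S. l i * acon M D G q i (ev (VG n0)))"
  proof (rule sum.mono_neutral_right)
    show "finite ((UNIV :: ctyp set) \<times> N \<times> N)" using finN by (intro finite_cartesian_product) auto
    show "?S \<subseteq> UNIV \<times> N \<times> N" using n0 by auto
    show "\<forall>i\<in>UNIV \<times> N \<times> N - ?S. l i * acon M D G q i (ev (VG n0)) = 0"
    proof
      fix i assume i: "i \<in> UNIV \<times> N \<times> N - ?S"
      obtain t n m where tnm: "i = (t,n,m)" by (cases i) auto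
      show "l i * acon M D G q i (ev (VG n0)) = 0"
        using i unfolding tnm by (cases t) (auto simp: ev_def)
    qed
  qed
  also have "\<dots> = (if G n0 = Glo M n0 then - l (TGlo,n0,n0) else 0) + (if G n0 = Ghi M n0 then l (TGhi,n0,n0) else 0)
    - l (TB,n0,n0) + l (TBn,n0,n0)"
    by (simp add: ev_def)
  finally show ?thesis .
qed


lemma rhs_VQ:
  fixes M :: "'n market"
  assumes finN: "finite N" and n0: "n0 \<in> N" and m0N: "m0 \<in> N" and m0: "m0 \<in> nbr M n0 - {n0}"
    and n0m: "n0 \<in> nbr M m0" and finB: "finite (nbr M n0)"
  shows "(\<Sum>i\<in>UNIV \<times> N \<times> N. l i * acon M D G q i (ev (VQ m0 n0))) =
    (if q m0 n0 = kap M m0 n0 then l (TK,n0,m0) else 0) + (if q m0 n0 + q n0 m0 = 0 then l (TZ,n0,m0) else 0)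
    + (if q m0 n0 + q n0 m0 = 0 then l (TZ,m0,n0) else 0) - l (TB,n0,n0) + l (TBn,n0,n0)"
proof -
  let ?S = "{(TK,n0,m0), (TZ,n0,m0), (TZ,m0,n0), (TB,n0,n0), (TBn,n0,n0)}"
  have hs: "(\<Sum>m'\<in>nbr M n0 - {n0}. ev (VQ m0 n0) (VQ m' n0)) = 1"
  proof (rule trans[OF sum_single[where a=m0]])
    show "finite (nbr M n0 - {n0})" using finB by simp
    show "m0 \<in> nbr M n0 - {n0}" by (rule m0)
    show "ev (VQ m0 n0) (VQ x n0) = 0" if "x \<noteq> m0" for x using that unfolding ev_def by simp
    show "ev (VQ m0 n0) (VQ m0 n0) = 1" unfolding ev_def by simp
  qed
  have h0: "\<And>n. n \<noteq> n0 \<Longrightarrow> (\<Sum>m'\<in>nbr M n - {n}. ev (VQ m0 n0) (VQ m' n)) = 0"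
    unfolding ev_def by (simp add: sum.neutral)
  have "(\<Sum>i\<in>UNIV \<times> N \<times> N. l i * acon M D G q i (ev (VQ m0 n0))) = (\<Sum>i\<in>?S. l i * acon M D G q i (ev (VQ m0 n0)))"
  proof (rule sum.mono_neutral_right)
    show "finite ((UNIV :: ctyp set) \<times> N \<times> N)" using finN by (intro finite_cartesian_product) auto
    show "?S \<subseteq> UNIV \<times> N \<times> N" using n0 m0N by auto
    show "\<forall>i\<in>UNIV \<times> N \<times> N - ?S. l i * acon M D G q i (ev (VQ m0 n0)) = 0"
    proof
      fix i assume i: "i \<in> UNIV \<times> N \<times> N - ?S"
      obtain t n m where tnm: "i = (t,n,m)" by (cases i) auto
      have nS: "(t,n,m) \<notin> ?S" using i tnm by blast
      have evD: "ev (VQ m0 n0) (VD x) = 0" "ev (VQ m0 n0) (VG x) = 0" for x unfolding ev_def by simp_all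
      show "l i * acon M D G q i (ev (VQ m0 n0)) = 0"
      proof (cases t)
        case TB
        show ?thesis
        proof (cases "m = n")
          case True
          then have "n \<noteq> n0" using nS TB by auto
          then show ?thesis using h0[of n] True unfolding tnm TB by (simp add: evD)
        qed (simp add: tnm TB)
      next
        case TBn
        show ?thesis
        proof (cases "m = n")
          case True
          then have "n \<noteq> n0" using nS TBn by auto
          then show ?thesis using h0[of n] True unfolding tnm TBn by (simp add: evD)
        qed (simp add: tnm TBn)
      next
        case TK
        then have "\<not> (n = n0 \<and> m = m0)" using nS by auto
        then have "ev (VQ m0 n0) (VQ m n) = 0" unfolding ev_def by auto
        then show ?thesis unfolding tnm TK by simp
      next
        case TZ
        then have "\<not> (n = n0 \<and> m = m0)" "\<not> (n = m0 \<and> m = n0)" using nS by auto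
        then have "ev (VQ m0 n0) (VQ m n) = 0" "ev (VQ m0 n0) (VQ n m) = 0" unfolding ev_def by auto
        then show ?thesis unfolding tnm TZ by simp
      qed (simp_all add: tnm evD)
    qed
  qed
  also have "\<dots> = (if q m0 n0 = kap M m0 n0 then l (TK,n0,m0) else 0) + (if q m0 n0 + q n0 m0 = 0 then l (TZ,n0,m0) else 0)
    + (if q m0 n0 + q n0 m0 = 0 then l (TZ,m0,n0) else 0) - l (TB,n0,n0) + l (TBn,n0,n0)"
  proof -
    have e1: "ev (VQ m0 n0) (VQ m0 n0) = 1" "ev (VQ m0 n0) (VQ n0 m0) = 0" "ev (VQ m0 n0) (VD n0) = 0"
      "ev (VQ m0 n0) (VG n0) = 0" using m0 unfolding ev_def by auto
    have e2: "q n0 m0 + q m0 n0 = q m0 n0 + q n0 m0" by simp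
    have d: "(TK,n0,m0) \<notin> {(TZ,n0,m0), (TZ,m0,n0), (TB,n0,n0), (TBn,n0,n0)}"
      "(TZ,n0,m0) \<notin> {(TZ,m0,n0), (TB,n0,n0), (TBn,n0,n0)}"
      "(TZ,m0,n0) \<notin> {(TB,n0,n0), (TBn,n0,n0)}" "(TB,n0,n0) \<notin> {(TBn,n0,n0)}" using m0 by auto
    show ?thesis
      using m0 n0m by (simp add: d e1 e2 hs) blast
  qed
  finally show ?thesis .
qed


lemma opt_ve:
  fixes M :: "'n market"
  assumes vm: "valid_market M" and opt: "optimalP M D G q"
  shows "VE M D G q"
proof -
  note v = vm[unfolded valid_market_def]
  define N where "N = nodes M"
  have finN: "finite N" using v N_def by blast
  have subN: "\<And>n. n \<in> N \<Longrightarrow> nbr M n \<subseteq> N" using v N_def by blast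
  have finnb: "\<And>n. n \<in> N \<Longrightarrow> finite (nbr M n)" using finN subN finite_subset by blast
  let ?I = "(UNIV :: ctyp set) \<times> N \<times> N"
  have finI: "finite ?I" using finN by (intro finite_cartesian_product) auto
  obtain l where l0: "\<forall>i\<in>?I. 0 \<le> l i"
    and lrep: "\<forall>x. cgrad M D G q x = (\<Sum>i\<in>?I. l i * acon M D G q i x)"
    using farkas[OF finI, of "acon M D G q" "cgrad M D G q"] lin_acon lin_cgrad
      dir_lemma[OF vm opt] unfolding N_def by blast
  have fz: "feasibleP M D G q" using opt unfolding optimalP_def by blast
  note fz' = fz[unfolded feasibleP_def, folded N_def]
  define mul where "mul n = (if D n = Dlo M n then l (TDlo,n,n) else 0)" for n
  define muh where "muh n = (if D n = Dhi M n then l (TDhi,n,n) else 0)" for n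
  define nul where "nul n = (if G n = Glo M n then l (TGlo,n,n) else 0)" for n
  define nuh where "nuh n = (if G n = Ghi M n then l (TGhi,n,n) else 0)" for n
  define lam where "lam n = l (TB,n,n) - l (TBn,n,n)" for n
  define xi where "xi n m = (if q m n = kap M m n then l (TK,n,m) else 0)" for n m
  define z0 where "z0 n m = (if q m n + q n m = 0 then l (TZ,n,m) else 0)" for n m
  define zeta where "zeta n m = z0 n m + z0 m n" for n m
  have KK: "KKT M D G q n (mul n) (muh n) (nul n) (nuh n) (xi n) (zeta n) (lam n)" if n: "n \<in> N" for n
  proof -
    have lnn: "0 \<le> l (t, n, n)" for t using l0 n by auto
    have st1: "2 * ua M n * (D n - Dstar M n) - mul n + muh n + lam n = 0"
    proof -
      have "- 2 * ua M n * (D n - Dstar M n) = (if D n = Dlo M n then - l (TDlo,n,n) else 0) + (if D n = Dhi M n then l (TDhi,n,n) else 0)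
        + l (TB,n,n) - l (TBn,n,n)"
        using lrep test_VD[OF finN[unfolded N_def] n[unfolded N_def], of D G q] rhs_VD[OF finN n, of l M D G q] by simp
      then show ?thesis unfolding mul_def muh_def lam_def by (auto split: if_splits)
    qed
    have st2: "ca M n * G n + cb M n - nul n + nuh n - lam n = 0"
    proof -
      have "- (ca M n * G n + cb M n) = (if G n = Glo M n then - l (TGlo,n,n) else 0) + (if G n = Ghi M n then l (TGhi,n,n) else 0)
        - l (TB,n,n) + l (TBn,n,n)"
        using lrep test_VG[OF finN[unfolded N_def] n[unfolded N_def], of D G q] rhs_VG[OF finN n, of l M D G q] by simp
      then show ?thesis unfolding nul_def nuh_def lam_def by (auto split: if_splits)
    qed
    have st3: "\<forall>m\<in>nbr M n - {n}. pref M n m + xi n m + zeta n m - lam n = 0"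
    proof
      fix m assume m: "m \<in> nbr M n - {n}"
      have mN: "m \<in> N" using m subN n by auto
      have nm: "n \<in> nbr M m" using v m mN n N_def by blast
      have "- pref M n m = (if q m n = kap M m n then l (TK,n,m) else 0) + (if q m n + q n m = 0 then l (TZ,n,m) else 0)
        + (if q m n + q n m = 0 then l (TZ,m,n) else 0) - l (TB,n,n) + l (TBn,n,n)"
        using lrep test_VQ[OF finN[unfolded N_def] n[unfolded N_def] m finnb[OF n], of D G q]
          rhs_VQ[OF finN n mN m nm finnb[OF n], of l D G q] by simp
      moreover have "q n m + q m n = q m n + q n m" by simp
      ultimately show "pref M n m + xi n m + zeta n m - lam n = 0"
        unfolding xi_def zeta_def z0_def lam_def by (auto split: if_splits)
    qed
    have f: "Dlo M n \<le> D n" "D n \<le> Dhi M n" "Glo M n \<le> G n" "G n \<le> Ghi M n"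
      "D n = G n + dG M n + netimp M q n" "\<forall>m\<in>nbr M n - {n}. q m n \<le> kap M m n"
      "\<forall>m\<in>nbr M n - {n}. q m n + q n m \<le> 0" using fz' n by blast+
    have f7: "\<forall>m\<in>nbr M n - {n}. q m n \<le> - q n m"
    proof
      fix m assume "m \<in> nbr M n - {n}"
      then have "q m n + q n m \<le> 0" using f(7) by blast
      then show "q m n \<le> - q n m" by linarith
    qed
    have c1: "0 \<le> mul n \<and> mul n * (D n - Dlo M n) = 0" unfolding mul_def using lnn by auto
    have c2: "0 \<le> muh n \<and> muh n * (Dhi M n - D n) = 0" unfolding muh_def using lnn by auto
    have c3: "0 \<le> nul n \<and> nul n * (G n - Glo M n) = 0" unfolding nul_def using lnn by auto
    have c4: "0 \<le> nuh n \<and> nuh n * (Ghi M n - G n) = 0" unfolding nuh_def using lnn by auto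
    have c5: "\<forall>m\<in>nbr M n - {n}. 0 \<le> xi n m \<and> xi n m * (kap M m n - q m n) = 0"
    proof
      fix m assume m: "m \<in> nbr M n - {n}"
      then have "m \<in> N" using subN n by auto
      then have "0 \<le> l (TK,n,m)" using l0 n by auto
      then show "0 \<le> xi n m \<and> xi n m * (kap M m n - q m n) = 0" unfolding xi_def by auto
    qed
    have c6: "\<forall>m\<in>nbr M n - {n}. 0 \<le> zeta n m \<and> zeta n m * (- q m n - q n m) = 0"
    proof
      fix m assume m: "m \<in> nbr M n - {n}"
      then have "m \<in> N" using subN n by auto
      then have "0 \<le> l (TZ,n,m)" "0 \<le> l (TZ,m,n)" using l0 n by auto
      moreover have "q n m + q m n = q m n + q n m" by simp
      ultimately show "0 \<le> zeta n m \<and> zeta n m * (- q m n - q n m) = 0"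
      proof (cases "q m n + q n m = 0")
        case True
        then have "- q m n - q n m = 0" by linarith
        then show ?thesis using \<open>0 \<le> l (TZ,n,m)\<close> \<open>0 \<le> l (TZ,m,n)\<close> unfolding zeta_def z0_def by simp
      next
        case False
        then have "q n m + q m n \<noteq> 0" by linarith
        then show ?thesis using False unfolding zeta_def z0_def by simp
      qed
    qed
    show ?thesis unfolding KKT_def using st1 st2 st3 f(1-6) f7 c1 c2 c3 c4 c5 c6 by blast
  qed
  show ?thesis unfolding VE_def
    apply (rule exI[of _ mul], rule exI[of _ muh], rule exI[of _ nul], rule exI[of _ nuh])
    apply (rule exI[of _ xi], rule exI[of _ zeta], rule exI[of _ lam])
    using KK unfolding N_def zeta_def by auto
qed

theorem proposition6:
  fixes M :: "'n market"
    and D G :: "'n \<Rightarrow> real" and q :: "'n \<Rightarrow> 'n \<Rightarrow> real"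
  assumes "valid_market M"
  shows "VE M D G q \<longleftrightarrow> optimalP M D G q"
  using ve_opt[OF assms] opt_ve[OF assms] by blast

end
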